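(* Let $R$ be an associative ring with unity, $\sigma$ an endomorphism of $R$ and $\delta$ a $\sigma$-derivation of $R$. Assume $R$ is right p.q.-Baer and $R$ satisfies one of the following: (i) $R$ is $(\sigma,\delta)$-skew Armendariz and satisfies $(\mathcal{C}_\sigma)$; (ii) $\mathcal{S}_\ell(R)=\mathcal{B}(R)$, $\sigma(Re)\subseteq Re$ for all $e\in\mathcal{B}(R)$, and $R$ satisfies $(\mathcal{C}_\sigma)$; (iii) $R$ is $\sigma$-rigid. Then the Ore extension $R[x;\sigma,\delta]$ is right p.q.-Baer.
   Context: A $\sigma$-derivation is an additive map $\delta$ with $\delta(ab)=\sigma(a)\delta(b)+\delta(a)b$. $R[x;\sigma,\delta]$ is the ring of polynomials $\sum a_ix^i$ (coefficients on the left) with $xa=\sigma(a)x+\delta(a)$. $R$ is $(\sigma,\delta)$-skew Armendariz if whenever $p=\sum_{i=0}^n a_ix^i$, $q=\sum_{j=0}^m b_jx^j\in R[x;\sigma,\delta]$ satisfy $pq=0$, then $a_ix^ib_jx^j=0$ in $R[x;\sigma,\delta]$ for all $i,j$. $R$ satisfies $(\mathcal{C}_\sigma)$ if $a\sigma(b)=0$ implies $ab=0$ for all $a,b\in R$. $\mathcal{S}_\ell(R)$ is the set of idempotents $e$ with $ere=re$ for all $r$; $\mathcal{B}(R)$ is the set of central idempotents. $R$ is $\sigma$-rigid if $a\sigma(a)=0$ implies $a=0$. A ring $T$ is right p.q.-Baer if for every $a\in T$ the right annihilator $\{t\in T\mid aTt=0\}$ is generated as a right ideal by an idempotent. *)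

theory Defs
  imports "HOL-Computational_Algebra.Polynomial"
begin

text \<open>Elements of the Ore extension R[x;sigma,delta] are represented by their
coefficient sequences, i.e. p = sum_i (coeff p i) x^i with coefficients on the left.
The type 'a poly is used only as a container of finitely supported coefficient
sequences (its own multiplication is NOT used).\<close>

definition ring_endo :: "('a::ring_1 \<Rightarrow> 'a) \<Rightarrow> bool" where
  "ring_endo \<sigma> \<longleftrightarrow> (\<forall>a b. \<sigma> (a + b) = \<sigma> a + \<sigma> b) \<and> (\<forall>a b. \<sigma> (a * b) = \<sigma> a * \<sigma> b) \<and> \<sigma> 1 = 1"

definition sigma_derivation :: "('a::ring_1 \<Rightarrow> 'a) \<Rightarrow> ('a \<Rightarrow> 'a) \<Rightarrow> bool" where
  "sigma_derivation \<sigma> \<delta> \<longleftrightarrow> (\<forall>a b. \<delta> (a + b) = \<delta> a + \<delta> b) \<and>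
     (\<forall>a b. \<delta> (a * b) = \<sigma> a * \<delta> b + \<delta> a * b)"

text \<open>xpow_mult sigma delta i b is the element x^i * b written in normal form
(sum of c_k x^k), using x a = sigma(a) x + delta(a).\<close>
fun xpow_mult :: "('a::ring_1 \<Rightarrow> 'a) \<Rightarrow> ('a \<Rightarrow> 'a) \<Rightarrow> nat \<Rightarrow> 'a \<Rightarrow> 'a poly" where
  "xpow_mult \<sigma> \<delta> 0 b = [:b:]"
| "xpow_mult \<sigma> \<delta> (Suc i) b =
     (let q = xpow_mult \<sigma> \<delta> i b in pCons 0 (map_poly \<sigma> q) + map_poly \<delta> q)"

text \<open>Multiplication in R[x;sigma,delta]:
 (sum a_i x^i)(sum b_j x^j) = sum_{i,j} a_i (x^i b_j) x^j.\<close>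
definition ore_mult :: "('a::ring_1 \<Rightarrow> 'a) \<Rightarrow> ('a \<Rightarrow> 'a) \<Rightarrow> 'a poly \<Rightarrow> 'a poly \<Rightarrow> 'a poly" where
  "ore_mult \<sigma> \<delta> p q =
     (\<Sum>i\<le>degree p. \<Sum>j\<le>degree q.
        (pCons 0 ^^ j) (map_poly (\<lambda>c. coeff p i * c) (xpow_mult \<sigma> \<delta> i (coeff q j))))"

definition right_pq_baer :: "('b::zero \<Rightarrow> 'b \<Rightarrow> 'b) \<Rightarrow> 'b set \<Rightarrow> bool" where
  "right_pq_baer mul T \<longleftrightarrow>
     (\<forall>a\<in>T. \<exists>e\<in>T. mul e e = e \<and>
        {t\<in>T. \<forall>s\<in>T. mul (mul a s) t = 0} = {mul e r | r. r \<in> T})"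

definition skew_armendariz :: "('a::ring_1 \<Rightarrow> 'a) \<Rightarrow> ('a \<Rightarrow> 'a) \<Rightarrow> bool" where
  "skew_armendariz \<sigma> \<delta> \<longleftrightarrow>
     (\<forall>p q. ore_mult \<sigma> \<delta> p q = 0 \<longrightarrow>
        (\<forall>i j. ore_mult \<sigma> \<delta> (monom (coeff p i) i) (monom (coeff q j) j) = 0))"

definition cond_C :: "('a::ring_1 \<Rightarrow> 'a) \<Rightarrow> bool" where
  "cond_C \<sigma> \<longleftrightarrow> (\<forall>a b. a * \<sigma> b = 0 \<longrightarrow> a * b = 0)"

definition S_left :: "'a::ring_1 set" where
  "S_left = {e. e * e = e \<and> (\<forall>r. e * r * e = r * e)}"

definition B_central :: "'a::ring_1 set" where
  "B_central = {e. e * e = e \<and> (\<forall>r. e * r = r * e)}"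

definition sigma_rigid :: "('a::ring_1 \<Rightarrow> 'a) \<Rightarrow> bool" where
  "sigma_rigid \<sigma> \<longleftrightarrow> (\<forall>a. a * \<sigma> a = 0 \<longrightarrow> a = 0)"

end

theory Submission
  imports Defs
begin


definition scal :: "'a::ring_1 \<Rightarrow> 'a poly \<Rightarrow> 'a poly" where
  "scal a q = map_poly (\<lambda>c. a * c) q"
definition rscal :: "'a::ring_1 \<Rightarrow> 'a poly \<Rightarrow> 'a poly" where
  "rscal a q = map_poly (\<lambda>c. c * a) q"

lemma coeff_scal[simp]: "coeff (scal a q) k = a * coeff q k"
  by (simp add: scal_def coeff_map_poly)
lemma coeff_rscal[simp]: "coeff (rscal a q) k = coeff q k * a"
  by (simp add: rscal_def coeff_map_poly)
lemma scal_add: "scal a (p + q) = scal a p + scal a q"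
  by (rule poly_eqI) (simp add: distrib_left)
lemma scal_add_left: "scal (a + b) q = scal a q + scal b q"
  by (rule poly_eqI) (simp add: distrib_right)
lemma scal_zero[simp]: "scal a 0 = 0" by (rule poly_eqI) simp
lemma scal_zero_left[simp]: "scal 0 q = 0" by (rule poly_eqI) simp
lemma scal_scal: "scal a (scal b q) = scal (a*b) q" by (rule poly_eqI) (simp add: mult.assoc)
lemma scal_one[simp]: "scal 1 q = q" by (rule poly_eqI) simp
lemma scal_sum: "scal a (sum f A) = (\<Sum>i\<in>A. scal a (f i))"
  using sum_comp_morphism[of "scal a" f A] by (simp add: scal_add o_def)
lemma rscal_add: "rscal a (p + q) = rscal a p + rscal a q"
  by (rule poly_eqI) (simp add: distrib_right)
lemma rscal_zero[simp]: "rscal a 0 = 0" by (rule poly_eqI) simp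
lemma rscal_sum: "rscal a (sum f A) = (\<Sum>i\<in>A. rscal a (f i))"
  using sum_comp_morphism[of "rscal a" f A] by (simp add: rscal_add o_def)
lemma rscal_scal: "rscal e (scal a q) = scal a (rscal e q)" by (rule poly_eqI) (simp add: mult.assoc)
lemma degree_scal: "degree (scal a q) \<le> degree q"
  by (rule degree_le) (simp add: coeff_eq_0)
lemma degree_rscal: "degree (rscal a q) \<le> degree q"
  by (rule degree_le) (simp add: coeff_eq_0)
lemma scal_pCons0: "scal a (pCons 0 q) = pCons 0 (scal a q)"
  by (rule poly_eqI) (simp add: coeff_pCons split: nat.split)
lemma scal_const: "scal a [:b:] = [:a*b:]"
  by (rule poly_eqI) (simp add: coeff_pCons split: nat.split)

locale ore =
  fixes \<sigma> \<delta> :: "'a::ring_1 \<Rightarrow> 'a"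
  assumes endo: "ring_endo \<sigma>" and der: "sigma_derivation \<sigma> \<delta>"
begin

lemma s_add: "\<sigma> (a+b) = \<sigma> a + \<sigma> b" using endo by (simp add: ring_endo_def)
lemma s_mult: "\<sigma> (a*b) = \<sigma> a * \<sigma> b" using endo by (simp add: ring_endo_def)
lemma s_one[simp]: "\<sigma> 1 = 1" using endo by (simp add: ring_endo_def)
lemma d_add: "\<delta> (a+b) = \<delta> a + \<delta> b" using der by (simp add: sigma_derivation_def)
lemma d_mult: "\<delta> (a*b) = \<sigma> a * \<delta> b + \<delta> a * b" using der by (simp add: sigma_derivation_def)
lemma s_zero[simp]: "\<sigma> 0 = 0" using s_add[of 0 0] by simp
lemma d_zero[simp]: "\<delta> 0 = 0" using d_add[of 0 0] by simp
lemma d_one[simp]: "\<delta> 1 = 0" using d_mult[of 1 1] by simp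
lemma s_minus: "\<sigma> (-a) = - \<sigma> a" using s_add[of a "-a"] by (simp add: eq_neg_iff_add_eq_0 add.commute)
lemma d_minus: "\<delta> (-a) = - \<delta> a" using d_add[of a "-a"] by (simp add: eq_neg_iff_add_eq_0 add.commute)
lemma s_diff: "\<sigma> (a - b) = \<sigma> a - \<sigma> b" using s_add[of a "-b"] s_minus[of b] by simp
lemma d_diff: "\<delta> (a - b) = \<delta> a - \<delta> b" using d_add[of a "-b"] d_minus[of b] by simp

definition X :: "'a poly \<Rightarrow> 'a poly" where
  "X q = pCons 0 (map_poly \<sigma> q) + map_poly \<delta> q"

lemma coeff_X: "coeff (X q) k = (if k = 0 then 0 else \<sigma> (coeff q (k - 1))) + \<delta> (coeff q k)"
  by (cases k) (simp_all add: X_def coeff_map_poly)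

lemma X_add: "X (p + q) = X p + X q"
  by (rule poly_eqI) (simp add: coeff_X s_add d_add algebra_simps)
lemma X_zero[simp]: "X 0 = 0" by (rule poly_eqI) (simp add: coeff_X)
lemma Xp_add: "(X^^i) (p + q) = (X^^i) p + (X^^i) q"
  by (induction i) (simp_all add: X_add)
lemma Xp_zero[simp]: "(X^^i) 0 = 0" by (induction i) simp_all
lemma Xp_sum: "(X^^i) (sum f A) = (\<Sum>j\<in>A. (X^^i) (f j))"
  using sum_comp_morphism[of "X^^i" f A] by (simp add: Xp_add o_def)
lemma X_pCons0: "X (pCons 0 q) = pCons 0 (X q)"
  by (rule poly_eqI) (simp add: coeff_X coeff_pCons split: nat.split)
lemma Xp_pCons0: "(X^^i) (pCons 0 q) = pCons 0 ((X^^i) q)"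
  by (induction i) (simp_all add: X_pCons0)
lemma Xp_shift: "(X^^i) ((pCons 0 ^^ j) q) = (pCons 0 ^^ j) ((X^^i) q)"
  by (induction j) (simp_all add: Xp_pCons0)
lemma shift_scal: "(pCons 0 ^^ j) (scal a q) = scal a ((pCons 0 ^^ j) q)"
  by (induction j) (simp_all add: scal_pCons0)
lemma shift_const: "(pCons 0 ^^ j) [:b:] = monom b j"
  by (induction j) (simp_all add: monom_Suc monom_0)

lemma xpow_X: "xpow_mult \<sigma> \<delta> i b = (X^^i) [:b:]"
  by (induction i) (simp_all add: Let_def X_def)

lemma X_scal: "X (scal c y) = scal (\<sigma> c) (X y) + scal (\<delta> c) y"
  by (rule poly_eqI) (simp add: coeff_X s_mult d_mult algebra_simps)

definition oreL :: "'a poly \<Rightarrow> 'a poly \<Rightarrow> 'a poly" where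
  "oreL p q = (\<Sum>i\<le>degree p. scal (coeff p i) ((X^^i) q))"

lemma oreL_bound:
  assumes "degree p \<le> N"
  shows "oreL p q = (\<Sum>i\<le>N. scal (coeff p i) ((X^^i) q))"
  unfolding oreL_def
  by (rule sum.mono_neutral_right[symmetric]) (use assms in \<open>auto simp: coeff_eq_0\<close>)

lemma ore_mult_eq: "ore_mult \<sigma> \<delta> p q = oreL p q"
proof -
  have "ore_mult \<sigma> \<delta> p q = (\<Sum>i\<le>degree p. \<Sum>j\<le>degree q.
        scal (coeff p i) ((X^^i) (monom (coeff q j) j)))"
    unfolding ore_mult_def scal_def[symmetric] xpow_X
    by (simp add: shift_scal Xp_shift[symmetric] shift_const)
  also have "\<dots> = (\<Sum>i\<le>degree p. scal (coeff p i) ((X^^i) q))"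
    by (simp add: scal_sum[symmetric] Xp_sum[symmetric] poly_as_sum_of_monoms)
  finally show ?thesis by (simp add: oreL_def)
qed

end


context ore begin

lemma coeff_oreL: "coeff (oreL p q) k = (\<Sum>i\<le>degree p. coeff p i * coeff ((X^^i) q) k)"
  by (simp add: oreL_def coeff_sum)

lemma oreL_zero[simp]: "oreL 0 q = 0" by (simp add: oreL_def)
lemma oreL_const: "oreL [:r:] q = scal r q" by (simp add: oreL_def)

lemma oreL_add: "oreL (u + v) q = oreL u q + oreL v q"
proof -
  define N where "N = max (degree u) (degree v)"
  have "degree (u+v) \<le> N" unfolding N_def by (rule degree_add_le) auto
  then have "oreL (u+v) q = (\<Sum>i\<le>N. scal (coeff (u+v) i) ((X^^i) q))" by (rule oreL_bound)
  also have "\<dots> = (\<Sum>i\<le>N. scal (coeff u i) ((X^^i) q)) + (\<Sum>i\<le>N. scal (coeff v i) ((X^^i) q))"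
    by (simp add: scal_add_left sum.distrib)
  also have "\<dots> = oreL u q + oreL v q"
    by (simp add: oreL_bound[of u N q] oreL_bound[of v N q] N_def)
  finally show ?thesis .
qed

lemma oreL_sum: "oreL (sum f A) q = (\<Sum>i\<in>A. oreL (f i) q)"
  using sum_comp_morphism[of "\<lambda>u. oreL u q" f A] by (simp add: oreL_add o_def)

lemma oreL_scal: "oreL (scal a u) q = scal a (oreL u q)"
proof -
  have "oreL (scal a u) q = (\<Sum>i\<le>degree u. scal (coeff (scal a u) i) ((X^^i) q))"
    by (rule oreL_bound[OF degree_scal])
  also have "\<dots> = scal a (oreL u q)"
    by (simp add: oreL_def scal_sum scal_scal)
  finally show ?thesis .
qed

lemma degree_X: "degree (X u) \<le> Suc (degree u)"
  by (rule degree_le) (simp add: coeff_X coeff_eq_0)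

lemma oreL_X: "oreL (X u) q = X (oreL u q)"
proof -
  define N where "N = degree u"
  have "oreL (X u) q = (\<Sum>i\<le>Suc N. scal (coeff (X u) i) ((X^^i) q))"
    by (rule oreL_bound) (use degree_X N_def in auto)
  also have "\<dots> = (\<Sum>i\<le>Suc N. scal (if i = 0 then 0 else \<sigma> (coeff u (i - 1))) ((X^^i) q))
      + (\<Sum>i\<le>Suc N. scal (\<delta> (coeff u i)) ((X^^i) q))"
    by (simp add: coeff_X scal_add_left sum.distrib del: sum.atMost_Suc)
  also have "(\<Sum>i\<le>Suc N. scal (if i = 0 then 0 else \<sigma> (coeff u (i - 1))) ((X^^i) q))
      = (\<Sum>i\<le>N. scal (\<sigma> (coeff u i)) ((X^^Suc i) q))"
    by (subst sum.atMost_Suc_shift) simp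
  also have "(\<Sum>i\<le>Suc N. scal (\<delta> (coeff u i)) ((X^^i) q)) = (\<Sum>i\<le>N. scal (\<delta> (coeff u i)) ((X^^i) q))"
    by (simp add: N_def coeff_eq_0)
  finally have L: "oreL (X u) q = (\<Sum>i\<le>N. scal (\<sigma> (coeff u i)) ((X^^Suc i) q)) + (\<Sum>i\<le>N. scal (\<delta> (coeff u i)) ((X^^i) q))" .
  have "X (oreL u q) = (\<Sum>i\<le>N. X (scal (coeff u i) ((X^^i) q)))"
    unfolding oreL_def N_def
    using sum_comp_morphism[of X "\<lambda>i. scal (coeff u i) ((X^^i) q)" "{..degree u}"]
    by (simp add: X_add o_def)
  also have "\<dots> = (\<Sum>i\<le>N. scal (\<sigma> (coeff u i)) ((X^^Suc i) q)) + (\<Sum>i\<le>N. scal (\<delta> (coeff u i)) ((X^^i) q))"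
    by (simp add: X_scal sum.distrib)
  finally show ?thesis using L by simp
qed

lemma oreL_Xp: "oreL ((X^^i) u) q = (X^^i) (oreL u q)"
  by (induction i) (simp_all add: oreL_X)

lemma oreL_assoc: "oreL (oreL p s) q = oreL p (oreL s q)"
  unfolding oreL_def[of p s] by (simp add: oreL_sum oreL_scal oreL_Xp oreL_def[of p])

lemma X_rscal:
  assumes "\<sigma> e = e" "\<delta> e = 0"
  shows "X (rscal e y) = rscal e (X y)"
  by (rule poly_eqI) (simp add: coeff_X s_mult d_mult assms algebra_simps)
lemma Xp_rscal:
  assumes "\<sigma> e = e" "\<delta> e = 0"
  shows "(X^^i) (rscal e y) = rscal e ((X^^i) y)"
  by (induction i) (simp_all add: X_rscal[OF assms])
lemma Xp_scal_fix:
  assumes "\<sigma> e = e" "\<delta> e = 0"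
  shows "(X^^i) (scal e y) = scal e ((X^^i) y)"
  by (induction i) (simp_all add: X_scal assms)
lemma rscal_central:
  assumes "\<forall>r. e * r = r * e"
  shows "rscal e y = scal e y"
  by (rule poly_eqI) (simp add: assms)

lemma oreL_rscal_left:
  assumes "\<sigma> e = e" "\<delta> e = 0"
  shows "oreL (rscal e p) y = oreL p (scal e y)"
proof -
  have "oreL (rscal e p) y = (\<Sum>i\<le>degree p. scal (coeff (rscal e p) i) ((X^^i) y))"
    by (rule oreL_bound[OF degree_rscal])
  then show ?thesis by (simp add: oreL_def Xp_scal_fix[OF assms] scal_scal)
qed

lemma rscal_oreL:
  assumes "\<sigma> e = e" "\<delta> e = 0"
  shows "rscal e (oreL p s) = oreL p (rscal e s)"
  by (simp add: oreL_def rscal_sum rscal_scal Xp_rscal[OF assms])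

lemma Xp_top:
  assumes "\<forall>k>N. coeff q k = 0"
  shows "(\<forall>k>N+i. coeff ((X^^i) q) k = 0) \<and> coeff ((X^^i) q) (N+i) = (\<sigma>^^i) (coeff q N)"
proof (induction i)
  case 0 then show ?case using assms by simp
next
  case (Suc i)
  have A: "\<forall>k>N+Suc i. coeff ((X^^Suc i) q) k = 0"
  proof (intro allI impI)
    fix k assume "k > N + Suc i"
    then have "k - 1 > N + i" "k > N + i" "k \<noteq> 0" by auto
    then show "coeff ((X^^Suc i) q) k = 0" using Suc.IH by (simp add: coeff_X)
  qed
  have "coeff ((X^^Suc i) q) (N + Suc i) = \<sigma> (coeff ((X^^i) q) (N+i)) + \<delta> (coeff ((X^^i) q) (N + Suc i))"
    by (simp add: coeff_X)
  also have "\<dots> = (\<sigma>^^Suc i) (coeff q N)" using Suc.IH by simp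
  finally show ?case using A by simp
qed

lemma oreL_top:
  assumes "\<forall>k>m. coeff q k = 0"
  shows "coeff (oreL p q) (degree p + m) = coeff p (degree p) * (\<sigma>^^degree p) (coeff q m)"
proof -
  have "coeff (oreL p q) (degree p + m) =
      (\<Sum>i\<le>degree p. if i = degree p then coeff p (degree p) * (\<sigma>^^degree p) (coeff q m) else 0)"
    unfolding coeff_oreL
  proof (rule sum.cong[OF refl])
    fix i assume "i \<in> {..degree p}"
    then show "coeff p i * coeff ((X ^^ i) q) (degree p + m) =
      (if i = degree p then coeff p (degree p) * (\<sigma>^^degree p) (coeff q m) else 0)"
    proof (cases "i = degree p")
      case True then show ?thesis using Xp_top[OF assms, of i] by (simp add: add.commute)
    next
      case False
      with \<open>i \<in> {..degree p}\<close> have "degree p + m > m + i" by auto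
      then show ?thesis using Xp_top[OF assms, of i] False by simp
    qed
  qed
  then show ?thesis by simp
qed

end



lemma C_iter:
  assumes C: "cond_C \<sigma>" and "a * (\<sigma>^^n) b = 0"
  shows "a * b = 0"
  using assms(2)
proof (induction n arbitrary: b)
  case 0 then show ?case by simp
next
  case (Suc n)
  have "(\<sigma>^^Suc n) b = (\<sigma>^^n) (\<sigma> b)" by (simp only: funpow_Suc_right o_def)
  then have "a * (\<sigma>^^n) (\<sigma> b) = 0" using Suc.prems by simp
  then have "a * \<sigma> b = 0" by (rule Suc.IH)
  then show ?case using C by (simp add: cond_C_def)
qed

context ore begin

lemma semicentral_facts:
  assumes C: "cond_C \<sigma>" and e: "e \<in> S_left"
  shows "(1 - e) * \<sigma> e = 0" "(1 - e) * \<delta> e = 0"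
proof -
  have ee: "e * e = e" and sc: "\<And>r. e * r * e = r * e" using e by (auto simp: S_left_def)
  have sc': "(1 - e) * r * e = 0" for r using sc[of r] by (simp add: algebra_simps)
  define v where "v = (1 - e) * \<sigma> e"
  have "\<sigma> e * \<sigma> (1 - e) = 0" by (simp flip: s_mult add: algebra_simps ee)
  then have "v * \<sigma> v = 0" unfolding v_def s_mult by (metis mult.assoc mult_zero_left mult_zero_right)
  then have "v * v = 0" using C by (simp add: cond_C_def)
  moreover have "v * v = v"
  proof -
    have "v * v = (1 - e) * \<sigma> e * \<sigma> e - ((1 - e) * \<sigma> e * e) * \<sigma> e"
      unfolding v_def by (simp add: algebra_simps)
    also have "(1 - e) * \<sigma> e * e = 0" by (rule sc')
    also have "(1 - e) * \<sigma> e * \<sigma> e = (1 - e) * \<sigma> e" by (simp flip: s_mult add: ee mult.assoc)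
    finally show ?thesis by (simp add: v_def)
  qed
  ultimately show v0: "(1 - e) * \<sigma> e = 0" by (simp add: v_def)
  have "\<delta> e = \<sigma> e * \<delta> e + \<delta> e * e" using d_mult[of e e] ee by simp
  then have "(1 - e) * \<delta> e = ((1 - e) * \<sigma> e) * \<delta> e + (1 - e) * \<delta> e * e"
    by (metis distrib_left mult.assoc)
  also have "\<dots> = 0" using v0 sc'[of "\<delta> e"] by simp
  finally show "(1 - e) * \<delta> e = 0" .
qed

lemma central_fix:
  assumes C: "cond_C \<sigma>" and e: "e \<in> B_central"
  shows "\<sigma> e = e" "\<delta> e = 0"
proof -
  have ee: "e * e = e" using e unfolding B_central_def by blast
  have c: "\<And>r. e * r = r * e" using e unfolding B_central_def by blast
  have ere: "e * r * e = r * e" for r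
  proof -
    have "e * r * e = r * e * e" by (simp only: c)
    also have "\<dots> = r * (e * e)" by (simp only: mult.assoc)
    finally have "e * r * e = r * (e * e)" .
    then show ?thesis by (simp add: ee)
  qed
  have e1: "e \<in> S_left" using ee ere unfolding S_left_def by blast
  have "(1 - e) * (1 - e) = 1 - e"
  proof -
    have "(1 - e) * (1 - e) = 1 * (1 - e) - e * (1 - e)" by (rule left_diff_distrib)
    also have "e * (1 - e) = e * 1 - e * e" by (rule right_diff_distrib)
    finally show ?thesis using ee by simp
  qed
  moreover have "(1 - e) * r * (1 - e) = r * (1 - e)" for r
  proof -
    have "(1 - e) * r * (1 - e) = r - e * r - r * e + e * r * e"
      by (simp add: algebra_simps)
    then show ?thesis using ere[of r] c[of r] by (simp add: algebra_simps)
  qed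
  ultimately have e2: "1 - e \<in> S_left" unfolding S_left_def by blast
  note f1 = semicentral_facts[OF C e1] and f2 = semicentral_facts[OF C e2]
  have "e * (1 - \<sigma> e) = 0" using f2(1) by (simp add: s_diff)
  then have A: "e = e * \<sigma> e" by (simp add: right_diff_distrib)
  have "(1 - e) * \<sigma> e = 0" by (rule f1(1))
  then have B: "\<sigma> e = e * \<sigma> e" by (simp add: left_diff_distrib)
  from A B show "\<sigma> e = e" by simp
  have "e * (0 - \<delta> e) = 0" using f2(2) by (simp add: d_diff)
  then have "e * \<delta> e = 0" by simp
  moreover have "(1 - e) * \<delta> e = 0" by (rule f1(2))
  ultimately show "\<delta> e = 0" by (simp add: left_diff_distrib)
qed

lemma pq_idem:
  fixes a :: 'a
  assumes pq: "right_pq_baer (*) (UNIV :: 'a set)" and SB: "S_left \<subseteq> (B_central :: 'a set)"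
  shows "\<exists>f\<in>B_central. \<forall>t. (\<forall>s. a * s * t = 0) \<longleftrightarrow> (\<exists>r. t = f * r)"
proof -
  have "\<exists>f\<in>(UNIV::'a set). f * f = f \<and>
     {t \<in> UNIV. \<forall>s\<in>UNIV. a * s * t = 0} = {f * r |r. r \<in> UNIV}"
    using pq unfolding right_pq_baer_def by (rule bspec) simp
  then obtain f :: 'a where ff: "f * f = f" and S: "{t \<in> UNIV. \<forall>s\<in>UNIV. a * s * t = 0} = {f * r |r. r \<in> UNIV}"
    by (elim bexE conjE)
  have iff: "(\<forall>s. a * s * t = 0) \<longleftrightarrow> (\<exists>r. t = f * r)" for t
  proof -
    have "(\<forall>s. a * s * t = 0) \<longleftrightarrow> t \<in> {t \<in> UNIV. \<forall>s\<in>UNIV. a * s * t = 0}" by simp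
    also have "\<dots> \<longleftrightarrow> t \<in> {f * r |r. r \<in> UNIV}" by (simp only: S)
    also have "\<dots> \<longleftrightarrow> (\<exists>r. t = f * r)" by simp
    finally show ?thesis .
  qed
  have "f \<in> S_left"
    unfolding S_left_def
  proof (safe)
    show "f * f = f" by (rule ff)
    fix r
    have "\<exists>r. f = f * r" by (rule exI[of _ 1]) simp
    then have af: "\<forall>s. a * s * f = 0" using iff by blast
    have "a * s * (r * f) = 0" for s
    proof -
      have "a * s * (r * f) = a * (s * r) * f" by (simp only: mult.assoc)
      then show ?thesis using af by simp
    qed
    then obtain r' where r': "r * f = f * r'" using iff by blast
    have "f * r * f = f * (r * f)" by (simp only: mult.assoc)
    also have "\<dots> = f * f * r'" by (simp only: r' mult.assoc)
    also have "\<dots> = r * f" by (simp only: ff r')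
    finally show "f * r * f = r * f" .
  qed
  then show ?thesis using SB iff by blast
qed

lemma inter:
  fixes a :: "nat \<Rightarrow> 'a" and n :: nat
  assumes pq: "right_pq_baer (*) (UNIV :: 'a set)" and SB: "S_left \<subseteq> (B_central :: 'a set)"
  shows "\<exists>e\<in>B_central. \<forall>t. (\<forall>i\<le>n. \<forall>s. a i * s * t = 0) \<longleftrightarrow> (\<exists>r. t = e * r)"
proof (induction n)
  case 0 then show ?case using pq_idem[OF pq SB, of "a 0"] by simp
next
  case (Suc n)
  obtain e where eB: "e \<in> B_central" and e: "\<And>t. (\<forall>i\<le>n. \<forall>s. a i * s * t = 0) \<longleftrightarrow> (\<exists>r. t = e * r)"
    using Suc.IH by blast
  obtain f where fB: "f \<in> B_central" and f: "\<And>t. (\<forall>s. a (Suc n) * s * t = 0) \<longleftrightarrow> (\<exists>r. t = f * r)"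
    using pq_idem[OF pq SB] by blast
  have ee: "e * e = e" using eB unfolding B_central_def by blast
  have ce: "\<And>r. e * r = r * e" using eB unfolding B_central_def by blast
  have ff: "f * f = f" using fB unfolding B_central_def by blast
  have cf: "\<And>r. f * r = r * f" using fB unfolding B_central_def by blast
  have gB: "e * f \<in> B_central"
    unfolding B_central_def
  proof (safe)
    have "e * f * (e * f) = e * (f * e) * f" by (simp only: mult.assoc)
    also have "\<dots> = e * (e * f) * f" by (simp only: cf)
    also have "\<dots> = (e * e) * (f * f)" by (simp only: mult.assoc)
    also have "\<dots> = e * f" by (simp only: ee ff)
    finally show "e * f * (e * f) = e * f" .
    fix r
    have "e * f * r = e * (f * r)" by (simp only: mult.assoc)
    also have "\<dots> = e * (r * f)" by (simp only: cf)
    also have "\<dots> = (e * r) * f" by (simp only: mult.assoc)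
    also have "\<dots> = (r * e) * f" by (simp only: ce)
    also have "\<dots> = r * (e * f)" by (simp only: mult.assoc)
    finally show "e * f * r = r * (e * f)" .
  qed
  have "(\<forall>i\<le>Suc n. \<forall>s. a i * s * t = 0) \<longleftrightarrow> (\<exists>r. t = e * f * r)" for t
  proof -
    have "(\<forall>i\<le>Suc n. \<forall>s. a i * s * t = 0) \<longleftrightarrow> (\<exists>r. t = e * r) \<and> (\<exists>r. t = f * r)"
      using e[of t] f[of t] by (auto simp: le_Suc_eq)
    also have "\<dots> \<longleftrightarrow> (\<exists>r. t = e * f * r)"
    proof
      assume H: "(\<exists>r. t = e * r) \<and> (\<exists>r. t = f * r)"
      then obtain r1 r2 where r1: "t = e * r1" and r2: "t = f * r2" by blast
      have et: "e * t = t" unfolding r1 by (simp only: mult.assoc[symmetric] ee)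
      have ft: "f * t = t" unfolding r2 by (simp only: mult.assoc[symmetric] ff)
      have "t = e * f * t" by (simp only: mult.assoc ft et)
      then show "\<exists>r. t = e * f * r" by blast
    next
      assume "\<exists>r. t = e * f * r"
      then obtain r where r: "t = e * f * r" by blast
      have "t = e * (f * r)" by (simp only: r mult.assoc)
      moreover have "t = f * (e * r)"
      proof -
        have "t = (e * f) * r" by (rule r)
        also have "\<dots> = (f * e) * r" by (simp only: ce)
        finally show ?thesis by (simp only: mult.assoc)
      qed
      ultimately show "(\<exists>r. t = e * r) \<and> (\<exists>r. t = f * r)" by blast
    qed
    finally show ?thesis .
  qed
  then show ?case using gB by blast
qed

end


context ore begin

lemma annB:
  assumes C: "cond_C \<sigma>" and pq: "right_pq_baer (*) (UNIV :: 'a set)"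
    and SB: "S_left \<subseteq> (B_central :: 'a set)"
  shows "(\<forall>r. oreL p (scal r q) = 0) \<Longrightarrow> coeff p i * r * coeff q j = 0"
proof (induction "degree p + degree q" arbitrary: p q i j r rule: less_induct)
  case less
  show ?case
  proof (cases "p = 0 \<or> q = 0")
    case True then show ?thesis by auto
  next
    case False
    define n where "n = degree p"
    define m where "m = degree q"
    have top: "coeff p n * r' * coeff q m = 0" for r'
    proof -
      have z: "\<forall>k>m. coeff (scal r' q) k = 0" by (simp add: m_def coeff_eq_0)
      have "coeff (oreL p (scal r' q)) (n + m) = coeff p n * (\<sigma>^^n) (coeff (scal r' q) m)"
        unfolding n_def by (rule oreL_top[OF z])
      then have "coeff p n * (\<sigma>^^n) (r' * coeff q m) = 0" using less.prems by simp
      then have "coeff p n * (r' * coeff q m) = 0" by (rule C_iter[OF C])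
      then show ?thesis by (simp add: mult.assoc)
    qed
    obtain f where fB: "f \<in> B_central" and fA: "\<And>t. (\<forall>s. coeff p n * s * t = 0) \<longleftrightarrow> (\<exists>r. t = f * r)"
      using pq_idem[OF pq SB, of "coeff p n"] by blast
    have ff: "f * f = f" using fB unfolding B_central_def by blast
    have cf: "\<And>r. f * r = r * f" using fB unfolding B_central_def by blast
    have sf: "\<sigma> f = f" and df: "\<delta> f = 0" using central_fix[OF C fB] by auto
    have "\<exists>r. f = f * r" by (rule exI[of _ 1]) simp
    then have "\<forall>s. coeff p n * s * f = 0" using fA by blast
    then have anf: "coeff p n * f = 0" by (metis mult_1_right)
    obtain r0 where r0: "coeff q m = f * r0" using fA top by blast
    have fbm: "(1 - f) * coeff q m = 0"
      by (simp add: r0 left_diff_distrib mult.assoc[symmetric] ff)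
    define p1 where "p1 = rscal f p"
    define q1 where "q1 = scal (1 - f) q"
    have H1: "\<forall>r. oreL p1 (scal r q) = 0"
    proof
      fix r
      have "oreL p1 (scal r q) = oreL p (scal (f * r) q)"
        unfolding p1_def by (simp add: oreL_rscal_left[OF sf df] scal_scal)
      then show "oreL p1 (scal r q) = 0" using less.prems by simp
    qed
    have H2: "\<forall>r. oreL p (scal r q1) = 0"
    proof
      fix r
      have "oreL p (scal r q1) = oreL p (scal (r * (1 - f)) q)"
        unfolding q1_def by (simp add: scal_scal)
      then show "oreL p (scal r q1) = 0" using less.prems by simp
    qed
    have dp1: "p1 = 0 \<or> degree p1 < n"
    proof (rule eq_zero_or_degree_less)
      show "degree p1 \<le> n" unfolding p1_def n_def by (rule degree_rscal)
      show "coeff p1 n = 0" unfolding p1_def using anf by simp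
    qed
    have dq1: "q1 = 0 \<or> degree q1 < m"
    proof (rule eq_zero_or_degree_less)
      show "degree q1 \<le> m" unfolding q1_def m_def by (rule degree_scal)
      show "coeff q1 m = 0" unfolding q1_def using fbm by simp
    qed
    have c1: "coeff p1 i' * r' * coeff q j' = 0" for i' j' r'
    proof (cases "p1 = 0")
      case True then show ?thesis by simp
    next
      case False
      then have "degree p1 + degree q < degree p + degree q" using dp1 n_def by simp
      then show ?thesis using less.hyps H1 by blast
    qed
    have c2: "coeff p i' * r' * coeff q1 j' = 0" for i' j' r'
    proof (cases "q1 = 0")
      case True then show ?thesis by simp
    next
      case False
      then have "degree p + degree q1 < degree p + degree q" using dq1 m_def by simp
      then show ?thesis using less.hyps H2 by blast
    qed
    have "coeff p i * r * coeff q j = coeff p i * (r * f) * coeff q j + coeff p i * r * ((1 - f) * coeff q j)"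
      by (simp add: algebra_simps)
    also have "coeff p i * (r * f) * coeff q j = coeff p1 i * r * coeff q j"
      unfolding p1_def by (simp add: cf mult.assoc)
    also have "coeff p i * r * ((1 - f) * coeff q j) = coeff p i * r * coeff q1 j"
      unfolding q1_def by simp
    finally show ?thesis using c1 c2 by simp
  qed
qed


lemma main:
  assumes C: "cond_C \<sigma>" and pq: "right_pq_baer (*) (UNIV :: 'a set)"
    and SB: "S_left \<subseteq> (B_central :: 'a set)"
  shows "right_pq_baer (ore_mult \<sigma> \<delta>) (UNIV :: 'a poly set)"
  unfolding right_pq_baer_def ore_mult_eq
proof (intro ballI)
  fix p :: "'a poly"
  obtain e where eB: "e \<in> B_central"
    and e: "\<And>t. (\<forall>i\<le>degree p. \<forall>s. coeff p i * s * t = 0) \<longleftrightarrow> (\<exists>r. t = e * r)"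
    using inter[OF pq SB, where a="coeff p" and n="degree p"] by blast
  have ee: "e * e = e" using eB unfolding B_central_def by blast
  have ce: "\<And>r. e * r = r * e" using eB unfolding B_central_def by blast
  have se: "\<sigma> e = e" and de: "\<delta> e = 0" using central_fix[OF C eB] by auto
  have "\<exists>r. e = e * r" by (rule exI[of _ 1]) simp
  then have ae0: "\<forall>i\<le>degree p. \<forall>s. coeff p i * s * e = 0" using e by blast
  have ae: "coeff p i * e = 0" for i
  proof (cases "i \<le> degree p")
    case True then show ?thesis using ae0 by (metis mult_1_right)
  next
    case False then show ?thesis by (simp add: coeff_eq_0)
  qed
  have rp: "rscal e p = 0" by (rule poly_eqI) (simp add: ae)
  show "\<exists>e'\<in>UNIV. oreL e' e' = e' \<and>
    {t \<in> UNIV. \<forall>s\<in>UNIV. oreL (oreL p s) t = 0} = {oreL e' r |r. r \<in> UNIV}"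
  proof (intro bexI conjI)
    show "oreL [:e:] [:e:] = [:e:]" by (simp add: oreL_const scal_const ee)
    show "{t \<in> UNIV. \<forall>s\<in>UNIV. oreL (oreL p s) t = 0} = {oreL [:e:] r |r. r \<in> UNIV}"
    proof (intro equalityI subsetI)
      fix t assume "t \<in> {t \<in> UNIV. \<forall>s\<in>UNIV. oreL (oreL p s) t = 0}"
      then have T: "\<And>s. oreL (oreL p s) t = 0" by simp
      have H: "\<forall>r. oreL p (scal r t) = 0"
      proof
        fix r
        show "oreL p (scal r t) = 0" using T[of "[:r:]"] by (simp add: oreL_assoc oreL_const)
      qed
      have tj: "e * coeff t j = coeff t j" for j
      proof -
        have "\<forall>i\<le>degree p. \<forall>s. coeff p i * s * coeff t j = 0"
          using annB[OF C pq SB H] by blast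
        then obtain r where r: "coeff t j = e * r" using e by blast
        show ?thesis by (simp add: r mult.assoc[symmetric] ee)
      qed
      have "t = scal e t" by (rule poly_eqI) (simp add: tj)
      then have "t = oreL [:e:] t" by (simp add: oreL_const)
      then show "t \<in> {oreL [:e:] r |r. r \<in> UNIV}" by blast
    next
      fix t assume "t \<in> {oreL [:e:] r |r. r \<in> UNIV}"
      then obtain r where t: "t = scal e r" by (auto simp: oreL_const)
      have "oreL (oreL p s) t = 0" for s
      proof -
        have "oreL (oreL p s) t = oreL (rscal e (oreL p s)) r"
          unfolding t by (simp add: oreL_rscal_left[OF se de])
        also have "\<dots> = oreL (oreL p (rscal e s)) r" by (simp add: rscal_oreL[OF se de])
        also have "\<dots> = oreL (oreL p (scal e s)) r" by (simp add: rscal_central ce)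
        also have "\<dots> = oreL (oreL (rscal e p) s) r" by (simp add: oreL_rscal_left[OF se de])
        also have "\<dots> = 0" by (simp add: rp)
        finally show ?thesis .
      qed
      then show "t \<in> {t \<in> UNIV. \<forall>s\<in>UNIV. oreL (oreL p s) t = 0}" by simp
    qed
  qed simp
qed


lemma caseI:
  assumes A: "skew_armendariz \<sigma> \<delta>" and C: "cond_C \<sigma>"
  shows "S_left \<subseteq> (B_central :: 'a set)"
proof
  fix e :: 'a assume eS: "e \<in> S_left"
  have ee: "e * e = e" using eS unfolding S_left_def by blast
  have sc: "\<And>r. e * r * e = r * e" using eS unfolding S_left_def by blast
  have v0: "(1 - e) * \<sigma> e = 0" and w0: "(1 - e) * \<delta> e = 0" using semicentral_facts[OF C eS] by auto
  have "e * r = r * e" for r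
  proof -
    define c where "c = e * r * (1 - e)"
    have cs: "c * \<sigma> e = 0" unfolding c_def by (simp add: mult.assoc v0)
    have cd: "c * \<delta> e = 0" unfolding c_def by (simp add: mult.assoc w0)
    have csc: "c * \<sigma> c = 0"
    proof -
      have "c * \<sigma> c = (c * \<sigma> e) * (\<sigma> r * \<sigma> (1 - e))"
        unfolding c_def by (simp add: s_mult mult.assoc)
      then show ?thesis using cs by simp
    qed
    have cdc: "c * \<delta> c = 0"
    proof -
      have "\<delta> c = \<sigma> e * \<delta> (r * (1 - e)) + \<delta> e * (r * (1 - e))"
        unfolding c_def by (simp add: mult.assoc d_mult)
      then have "c * \<delta> c = (c * \<sigma> e) * \<delta> (r * (1 - e)) + (c * \<delta> e) * (r * (1 - e))"
        by (simp add: distrib_left mult.assoc)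
      then show ?thesis using cs cd by simp
    qed
    have ec: "e * c = c" unfolding c_def by (simp add: mult.assoc[symmetric] ee)
    define f where "f = [:e, - c:]"
    define g where "g = [:1 - e, c:]"
    have df: "degree f \<le> 1" unfolding f_def by simp
    have "oreL f g = (\<Sum>i\<le>1. scal (coeff f i) ((X^^i) g))" by (rule oreL_bound[OF df])
    also have "\<dots> = 0"
    proof (rule poly_eqI)
      fix k
      have "coeff (\<Sum>i\<le>1. scal (coeff f i) ((X^^i) g)) k = e * coeff g k + (- c) * coeff (X g) k"
        by (simp add: coeff_sum f_def)
      also have "\<dots> = 0"
      proof -
        consider "k = 0" | "k = 1" | "k = 2" | "k \<ge> 3" by linarith
        then show ?thesis
        proof cases
          case 1
          have "e * (1 - e) + (- c) * \<delta> (1 - e) = c * \<delta> e"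
            by (simp add: ee right_diff_distrib d_diff)
          then show ?thesis using 1 cd by (simp add: g_def coeff_X)
        next
          case 2
          have "e * c + (- c) * (\<sigma> (1 - e) + \<delta> c) = c * \<sigma> e - c * \<delta> c"
            by (simp add: ec s_diff right_diff_distrib distrib_left)
          then show ?thesis using 2 cs cdc by (simp add: g_def coeff_X)
        next
          case 3
          then show ?thesis using csc by (simp add: g_def coeff_X numeral_2_eq_2)
        next
          case 4
          then have "coeff g k = 0" "coeff g (k - 1) = 0" by (auto simp: g_def coeff_pCons split: nat.split)
          then show ?thesis using 4 by (simp add: coeff_X)
        qed
      qed
      finally show "coeff (\<Sum>i\<le>1. scal (coeff f i) ((X^^i) g)) k = coeff 0 k" by simp
    qed
    finally have "ore_mult \<sigma> \<delta> f g = 0" by (simp add: ore_mult_eq)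
    then have "ore_mult \<sigma> \<delta> (monom (coeff f 0) 0) (monom (coeff g 1) 1) = 0"
      using A unfolding skew_armendariz_def by blast
    then have "scal e (monom c 1) = 0" by (simp add: f_def g_def ore_mult_eq monom_0 oreL_const)
    then have "coeff (scal e (monom c 1)) 1 = 0" by simp
    then have "c = 0" using ec by simp
    then have "e * r = e * r * e" unfolding c_def by (simp add: right_diff_distrib)
    then show ?thesis using sc by simp
  qed
  then show "e \<in> B_central" using ee unfolding B_central_def by blast
qed

lemma caseIII:
  assumes R: "sigma_rigid \<sigma>"
  shows "cond_C \<sigma>" "S_left \<subseteq> (B_central :: 'a set)"
proof -
  have rig: "\<And>a::'a. a * \<sigma> a = 0 \<Longrightarrow> a = 0" using R unfolding sigma_rigid_def by blast
  have red: "a = 0" if "a * a = 0" for a :: 'a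
  proof -
    have "(a * \<sigma> a) * \<sigma> (a * \<sigma> a) = a * (\<sigma> (a * a)) * \<sigma> (\<sigma> a)"
      by (simp add: s_mult mult.assoc)
    then have "(a * \<sigma> a) * \<sigma> (a * \<sigma> a) = 0" using that by simp
    then have "a * \<sigma> a = 0" by (rule rig)
    then show ?thesis by (rule rig)
  qed
  have rev: "y * x = 0" if "x * y = 0" for x y :: 'a
  proof -
    have "(y * x) * (y * x) = y * (x * y) * x" by (simp add: mult.assoc)
    then have "(y * x) * (y * x) = 0" using that by simp
    then show ?thesis by (rule red)
  qed
  show C: "cond_C \<sigma>" unfolding cond_C_def
  proof (intro allI impI)
    fix a b :: 'a assume ab: "a * \<sigma> b = 0"
    have "(b * a) * \<sigma> (b * a) = b * (a * \<sigma> b) * \<sigma> a" by (simp add: s_mult mult.assoc)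
    then have "(b * a) * \<sigma> (b * a) = 0" using ab by simp
    then have "b * a = 0" by (rule rig)
    then show "a * b = 0" by (rule rev)
  qed
  show "S_left \<subseteq> (B_central :: 'a set)"
  proof
    fix e :: 'a assume eS: "e \<in> S_left"
    have ee: "e * e = e" using eS unfolding S_left_def by blast
    have sc: "\<And>r. e * r * e = r * e" using eS unfolding S_left_def by blast
    have "e * r = r * e" for r
    proof -
      define x where "x = e * r * (1 - e)"
      have "(1 - e) * e = 0" by (simp add: left_diff_distrib ee)
      have "x * x = (e * r) * ((1 - e) * e) * (r * (1 - e))" unfolding x_def
        by (simp only: mult.assoc)
      also have "\<dots> = 0" using \<open>(1 - e) * e = 0\<close> by simp
      finally have "x = 0" by (rule red)
      then have "e * r = e * r * e" unfolding x_def by (simp add: right_diff_distrib)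
      then show ?thesis using sc by simp
    qed
    then show "e \<in> B_central" using ee unfolding B_central_def by blast
  qed
qed

end

theorem corollary3p4:
  fixes \<sigma> \<delta> :: "'a::ring_1 \<Rightarrow> 'a"
  assumes "ring_endo \<sigma>"
    and "sigma_derivation \<sigma> \<delta>"
    and "right_pq_baer (*) (UNIV :: 'a set)"
    and "(skew_armendariz \<sigma> \<delta> \<and> cond_C \<sigma>)
         \<or> ((S_left :: 'a set) = B_central \<and>
            (\<forall>e\<in>B_central. \<forall>r. \<exists>s. \<sigma> (r * e) = s * e) \<and> cond_C \<sigma>)
         \<or> sigma_rigid \<sigma>"
  shows "right_pq_baer (ore_mult \<sigma> \<delta>) (UNIV :: 'a poly set)"
proof -
  interpret ore \<sigma> \<delta> using assms(1,2) by (rule ore.intro)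
  have "cond_C \<sigma> \<and> S_left \<subseteq> (B_central :: 'a set)"
    using assms(4) caseI caseIII by blast
  then show ?thesis using main assms(3) by blast
qed


end
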